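(* For every integer $t\ge 2$ there exists a regular simple graph $\Gamma$ on $2t$ vertices such that $E(\Gamma)=E(\bar\Gamma)$ and $\Gamma$ and $\bar\Gamma$ are not isospectral.
   Context: The energy $E(\Gamma)$ is the sum of the absolute values of the adjacency eigenvalues (with multiplicity); $\bar\Gamma$ is the complement of $\Gamma$; two graphs are isospectral if their adjacency spectra (with multiplicities) coincide. *)

theory Defs
  imports "Jordan_Normal_Form.Char_Poly"
begin

definition simple_graph :: "nat \<Rightarrow> (nat \<Rightarrow> nat \<Rightarrow> bool) \<Rightarrow> bool" where
  "simple_graph n E \<longleftrightarrow> (\<forall>i j. E i j \<longrightarrow> i < n \<and> j < n) \<and>
     (\<forall>i j. E i j \<longleftrightarrow> E j i) \<and> (\<forall>i. \<not> E i i)"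

definition regular_graph :: "nat \<Rightarrow> (nat \<Rightarrow> nat \<Rightarrow> bool) \<Rightarrow> bool" where
  "regular_graph n E \<longleftrightarrow> (\<exists>k. \<forall>i<n. card {j. j < n \<and> E i j} = k)"

definition complement_graph :: "nat \<Rightarrow> (nat \<Rightarrow> nat \<Rightarrow> bool) \<Rightarrow> nat \<Rightarrow> nat \<Rightarrow> bool" where
  "complement_graph n E i j \<longleftrightarrow> i < n \<and> j < n \<and> i \<noteq> j \<and> \<not> E i j"

definition adj_matrix :: "nat \<Rightarrow> (nat \<Rightarrow> nat \<Rightarrow> bool) \<Rightarrow> complex mat" where
  "adj_matrix n E = mat n n (\<lambda>(i, j). if E i j then 1 else 0)"

definition adj_spectrum :: "nat \<Rightarrow> (nat \<Rightarrow> nat \<Rightarrow> bool) \<Rightarrow> complex multiset" where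
  "adj_spectrum n E = proots (char_poly (adj_matrix n E))"

definition graph_energy :: "nat \<Rightarrow> (nat \<Rightarrow> nat \<Rightarrow> bool) \<Rightarrow> real" where
  "graph_energy n E = (\<Sum>z\<in>#adj_spectrum n E. cmod z)"

definition isospectral :: "nat \<Rightarrow> (nat \<Rightarrow> nat \<Rightarrow> bool) \<Rightarrow> (nat \<Rightarrow> nat \<Rightarrow> bool) \<Rightarrow> bool" where
  "isospectral n E F \<longleftrightarrow> adj_spectrum n E = adj_spectrum n F"

end

theory Submission imports Defs begin

definition Jm :: "nat \<Rightarrow> complex \<Rightarrow> complex \<Rightarrow> complex mat" where
  "Jm n a b = mat n n (\<lambda>(i,j). if i = j then a + b else b)"
definition Nm :: "nat \<Rightarrow> complex \<Rightarrow> complex \<Rightarrow> complex mat" where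
  "Nm n a b = mat n n (\<lambda>(i,j). if i = 0 then (if j = 0 then a + of_nat n * b else b) else if i = j then a else 0)"
definition Pm :: "nat \<Rightarrow> complex mat" where
  "Pm n = mat n n (\<lambda>(i,j). if i = j \<or> j = 0 then 1 else 0)"
definition Qm :: "nat \<Rightarrow> complex mat" where
  "Qm n = mat n n (\<lambda>(i,j). if i = j then 1 else if j = 0 then -1 else 0)"

lemma Jm_carrier[simp]: "Jm n a b \<in> carrier_mat n n" by (simp add: Jm_def)
lemma Nm_carrier[simp]: "Nm n a b \<in> carrier_mat n n" by (simp add: Nm_def)
lemma Pm_carrier[simp]: "Pm n \<in> carrier_mat n n" by (simp add: Pm_def)
lemma Qm_carrier[simp]: "Qm n \<in> carrier_mat n n" by (simp add: Qm_def)
lemma dims[simp]: "dim_row (Jm n a b) = n" "dim_col (Jm n a b) = n" "dim_row (Nm n a b) = n" "dim_col (Nm n a b) = n"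
  "dim_row (Pm n) = n" "dim_col (Pm n) = n" "dim_row (Qm n) = n" "dim_col (Qm n) = n"
  by (auto simp: Jm_def Nm_def Pm_def Qm_def)

lemma mult_entry: assumes "A \<in> carrier_mat n m" "B \<in> carrier_mat m k" "i < n" "j < k"
  shows "(A * B) $$ (i,j) = (\<Sum>l<m. A $$ (i,l) * B $$ (l,j))"
  using assms by (simp add: scalar_prod_def lessThan_atLeast0)

lemma PQ: "Pm n * Qm n = 1\<^sub>m n"
proof (rule eq_matI)
  fix i j assume ij: "i < dim_row (1\<^sub>m n)" "j < dim_col (1\<^sub>m n)"
  hence i: "i < n" and j: "j < n" by auto
  have "(Pm n * Qm n) $$ (i,j) = (\<Sum>k<n. Pm n $$ (i,k) * Qm n $$ (k,j))"
    using i j by (intro mult_entry) auto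
  also have "\<dots> = (\<Sum>k<n. (if k = i then Qm n $$ (i,j) else 0) + (if k = 0 then (if i \<noteq> 0 then Qm n $$ (0,j) else 0) else 0))"
    by (rule sum.cong, insert i, auto simp: Pm_def)
  also have "\<dots> = 1\<^sub>m n $$ (i,j)"
    using i j by (auto simp: sum.distrib Qm_def sum.delta)
  finally show "(Pm n * Qm n) $$ (i,j) = 1\<^sub>m n $$ (i,j)" .
qed auto

lemma QP: "Qm n * Pm n = 1\<^sub>m n"
proof (rule eq_matI)
  fix i j assume ij: "i < dim_row (1\<^sub>m n)" "j < dim_col (1\<^sub>m n)"
  hence i: "i < n" and j: "j < n" by auto
  have "(Qm n * Pm n) $$ (i,j) = (\<Sum>k<n. Qm n $$ (i,k) * Pm n $$ (k,j))"
    using i j by (intro mult_entry) auto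
  also have "\<dots> = (\<Sum>k<n. (if k = i then Pm n $$ (i,j) else 0) + (if k = 0 then (if i \<noteq> 0 then - Pm n $$ (0,j) else 0) else 0))"
    by (rule sum.cong, insert i, auto simp: Qm_def)
  also have "\<dots> = 1\<^sub>m n $$ (i,j)"
    using i j by (auto simp: sum.distrib Pm_def sum.delta)
  finally show "(Qm n * Pm n) $$ (i,j) = 1\<^sub>m n $$ (i,j)" .
qed auto

lemma JP: "Jm n a b * Pm n = Pm n * Nm n a b"
proof (rule eq_matI)
  fix i j assume ij: "i < dim_row (Pm n * Nm n a b)" "j < dim_col (Pm n * Nm n a b)"
  hence i: "i < n" and j: "j < n" by auto
  show "(Jm n a b * Pm n) $$ (i,j) = (Pm n * Nm n a b) $$ (i,j)"
  proof (cases "j = 0")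
    case True
    have "(Jm n a b * Pm n) $$ (i,j) = (\<Sum>k<n. Jm n a b $$ (i,k) * Pm n $$ (k,j))"
      using i j by (intro mult_entry) auto
    also have "\<dots> = (\<Sum>k<n. b + (if k = i then a else 0))"
      by (rule sum.cong, insert i True, auto simp: Pm_def Jm_def)
    also have "\<dots> = a + of_nat n * b" using i by (simp add: sum.distrib sum.delta)
    finally have 1: "(Jm n a b * Pm n) $$ (i,j) = a + of_nat n * b" .
    have "(Pm n * Nm n a b) $$ (i,j) = (\<Sum>k<n. Pm n $$ (i,k) * Nm n a b $$ (k,j))"
      using i j by (intro mult_entry) auto
    also have "\<dots> = (\<Sum>k<n. if k = 0 then a + of_nat n * b else 0)"
      by (rule sum.cong, insert i True, auto simp: Pm_def Nm_def)
    also have "\<dots> = a + of_nat n * b" using i by (simp add: sum.delta)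
    finally show ?thesis using 1 by simp
  next
    case False
    have "(Jm n a b * Pm n) $$ (i,j) = (\<Sum>k<n. Jm n a b $$ (i,k) * Pm n $$ (k,j))"
      using i j by (intro mult_entry) auto
    also have "\<dots> = (\<Sum>k<n. if k = j then Jm n a b $$ (i,j) else 0)"
      by (rule sum.cong, insert i j False, auto simp: Pm_def)
    finally have 1: "(Jm n a b * Pm n) $$ (i,j) = Jm n a b $$ (i,j)" using j by (simp add: sum.delta)
    have "(Pm n * Nm n a b) $$ (i,j) = (\<Sum>k<n. Pm n $$ (i,k) * Nm n a b $$ (k,j))"
      using i j by (intro mult_entry) auto
    also have "\<dots> = (\<Sum>k<n. (if k = 0 then b else 0) + (if k = i \<and> i \<noteq> 0 then Nm n a b $$ (i,j) else 0))"
      by (rule sum.cong, insert i j False, auto simp: Pm_def Nm_def)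
    also have "\<dots> = b + (if i \<noteq> 0 then Nm n a b $$ (i,j) else 0)"
      using i j by (simp add: sum.distrib sum.delta)
    finally show ?thesis using 1 i j False by (auto simp: Jm_def Nm_def)
  qed
qed auto

lemma Jm_similar: "similar_mat (Jm n a b) (Nm n a b)"
proof (rule similar_matI[of _ _ "Pm n" "Qm n" n])
  show "Jm n a b = Pm n * Nm n a b * Qm n"
  proof -
    have "Jm n a b = Jm n a b * (Pm n * Qm n)" using PQ by simp
    also have "\<dots> = (Jm n a b * Pm n) * Qm n" by (simp add: assoc_mult_mat[of _ n n _ n _ n])
    also have "\<dots> = Pm n * Nm n a b * Qm n" by (simp add: JP)
    finally show ?thesis .
  qed
qed (auto simp: PQ QP)

lemma Nm_ut: "upper_triangular (Nm n a b)"
  by (auto simp: upper_triangular_def Nm_def)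

lemma Nm_diag: "diag_mat (Nm n a b) = (if n = 0 then [] else (a + of_nat n * b) # replicate (n - 1) a)"
  by (rule nth_equalityI, auto simp: diag_mat_def Nm_def nth_Cons split: nat.splits)


lemma blk: fixes X :: "complex mat" assumes X: "X \<in> carrier_mat t t" and Y: "Y \<in> carrier_mat t t"
  shows "similar_mat (four_block_mat X Y Y X) (four_block_mat (X + Y) Y (0\<^sub>m t t) (X - Y))"
proof (rule similar_matI[of _ _ "four_block_mat (1\<^sub>m t :: complex mat) (0\<^sub>m t t) (1\<^sub>m t) (1\<^sub>m t)"
     "four_block_mat (1\<^sub>m t :: complex mat) (0\<^sub>m t t) (- 1\<^sub>m t) (1\<^sub>m t)" "t + t"])
  have h1: "(1\<^sub>m t::complex mat) * 1\<^sub>m t = 1\<^sub>m t" by (rule left_mult_one_mat, auto)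
  have h2: "(1\<^sub>m t::complex mat) * - 1\<^sub>m t = - 1\<^sub>m t" by (rule left_mult_one_mat, auto)
  have h2': "- (1\<^sub>m t::complex mat) * 1\<^sub>m t = - 1\<^sub>m t" by (rule right_mult_one_mat, auto)
  have h3: "(1\<^sub>m t::complex mat) + - 1\<^sub>m t = 0\<^sub>m t t" by (rule eq_matI, auto)
  have h3': "- (1\<^sub>m t::complex mat) + 1\<^sub>m t = 0\<^sub>m t t" by (rule eq_matI, auto)
  have h7: "(1\<^sub>m t::complex mat) + - 0\<^sub>m t t = 1\<^sub>m t" "- 0\<^sub>m t t + (1\<^sub>m t::complex mat) = 1\<^sub>m t" "- (0\<^sub>m t t :: complex mat) = 0\<^sub>m t t" by (auto intro!: eq_matI)
  have h4: "X * 1\<^sub>m t = X" "Y * 1\<^sub>m t = Y" "(X + Y) * 1\<^sub>m t = X + Y" using X Y by auto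
  have h5: "1\<^sub>m t * X = X" "1\<^sub>m t * Y = Y" "1\<^sub>m t * (X + Y) = X + Y" "1\<^sub>m t * (X - Y) = X - Y" using X Y by auto
  have h6: "(X + Y) + - Y = X" "Y + (X - Y) = X" "(X + Y) * - 1\<^sub>m t = - (X + Y)" "X + Y + - (X + Y) = 0\<^sub>m t t"
    "Y * 0\<^sub>m t t = 0\<^sub>m t t" "(X + Y) * 0\<^sub>m t t = 0\<^sub>m t t" "X * - 1\<^sub>m t = - X" "- X + X = 0\<^sub>m t t"
    "0\<^sub>m t t + Y = Y" "0\<^sub>m t t * (X - Y) = 0\<^sub>m t t" "0\<^sub>m t t * Y = 0\<^sub>m t t"
    "(X + Y) * 0\<^sub>m t t + Y * 1\<^sub>m t = Y" "X + (Y + - X) = Y" "X * 0\<^sub>m t t + Y * 1\<^sub>m t = Y"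
    using X Y by (auto intro!: eq_matI)
  show "four_block_mat (1\<^sub>m t :: complex mat) (0\<^sub>m t t) (1\<^sub>m t) (1\<^sub>m t) * four_block_mat (1\<^sub>m t :: complex mat) (0\<^sub>m t t) (- 1\<^sub>m t) (1\<^sub>m t) = 1\<^sub>m (t + t)"
    by (subst mult_four_block_mat[of _ t t _ t _ t _ _ t _ t], simp_all add: h7 h1 h2 h3)
  show "four_block_mat (1\<^sub>m t :: complex mat) (0\<^sub>m t t) (- 1\<^sub>m t) (1\<^sub>m t) * four_block_mat (1\<^sub>m t :: complex mat) (0\<^sub>m t t) (1\<^sub>m t) (1\<^sub>m t) = 1\<^sub>m (t + t)"
    by (subst mult_four_block_mat[of _ t t _ t _ t _ _ t _ t], simp_all add: h7 h1 h2' h3')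
  have "four_block_mat (1\<^sub>m t :: complex mat) (0\<^sub>m t t) (1\<^sub>m t) (1\<^sub>m t) * four_block_mat (X + Y) Y (0\<^sub>m t t) (X - Y)
     = four_block_mat (X + Y) Y (X + Y) X"
    by (subst mult_four_block_mat[of _ t t _ t _ t _ _ t _ t], insert X Y, simp_all add: h7 h5 h6 minus_carrier_mat)
  moreover have "four_block_mat (X + Y) Y (X + Y) X * four_block_mat (1\<^sub>m t :: complex mat) (0\<^sub>m t t) (- 1\<^sub>m t) (1\<^sub>m t)
     = four_block_mat X Y Y X"
    by (subst mult_four_block_mat[of _ t t _ t _ t _ _ t _ t], insert X Y, simp_all add: h7 h4 h6)
  ultimately show "four_block_mat X Y Y X = four_block_mat (1\<^sub>m t :: complex mat) (0\<^sub>m t t) (1\<^sub>m t) (1\<^sub>m t) * four_block_mat (X + Y) Y (0\<^sub>m t t) (X - Y) *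
    four_block_mat (1\<^sub>m t :: complex mat) (0\<^sub>m t t) (- 1\<^sub>m t) (1\<^sub>m t)" by simp
qed (insert X Y, auto)


lemma proots_lin: "proots (\<Prod>a\<leftarrow>as. [:- a, 1:]) = mset (as :: complex list)"
proof (induction as)
  case (Cons a as)
  have nz: "(\<Prod>a\<leftarrow>as. [:- a, 1:]) \<noteq> 0" by (auto simp: prod_list_zero_iff)
  have "proots (\<Prod>a\<leftarrow>a # as. [:- a, 1:]) = proots [:- a, 1:] + proots (\<Prod>a\<leftarrow>as. [:- a, 1:])"
    unfolding list.map prod_list.Cons by (rule proots_mult, simp, rule nz)
  also have "\<dots> = {#a#} + mset as" using Cons proots_linear_factor[of "-a"] by simp
  finally show ?case by simp
qed simp

lemma Jm_add: "Jm n a b + Jm n c d = Jm n (a + c) (b + d)"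
  by (rule eq_matI, auto simp: Jm_def)
lemma Jm_sub: "Jm n a b - Jm n c d = Jm n (a - c) (b - d)"
  by (rule eq_matI, auto simp: Jm_def)

lemma spec_block: assumes Y: "Y \<in> carrier_mat t t"
  shows "proots (char_poly (four_block_mat (Jm t a b) Y (0\<^sub>m t t) (Jm t c d)))
     = mset (diag_mat (Nm t a b) @ diag_mat (Nm t c d))"
proof -
  obtain B0 where B0: "B0 \<in> carrier_mat t t" and
    sim: "similar_mat (four_block_mat (Jm t a b) Y (0\<^sub>m t t) (Jm t c d)) (four_block_mat (Nm t a b) B0 (0\<^sub>m t t) (Nm t c d))"
    using similar_mat_four_block_0_ex[OF Jm_similar Jm_similar Y Jm_carrier Jm_carrier] by blast
  have C: "four_block_mat (Nm t a b) B0 (0\<^sub>m t t) (Nm t c d) \<in> carrier_mat (t + t) (t + t)" using B0 by auto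
  have ut: "upper_triangular (four_block_mat (Nm t a b) B0 (0\<^sub>m t t) (Nm t c d))"
    by (rule upper_triangular_four_block, auto simp: Nm_ut)
  have "char_poly (four_block_mat (Jm t a b) Y (0\<^sub>m t t) (Jm t c d)) = char_poly (four_block_mat (Nm t a b) B0 (0\<^sub>m t t) (Nm t c d))"
    by (rule char_poly_similar[OF sim])
  also have "\<dots> = (\<Prod>a\<leftarrow>diag_mat (four_block_mat (Nm t a b) B0 (0\<^sub>m t t) (Nm t c d)). [:- a, 1:])"
    by (rule char_poly_upper_triangular[OF C ut])
  also have "diag_mat (four_block_mat (Nm t a b) B0 (0\<^sub>m t t) (Nm t c d)) = diag_mat (Nm t a b) @ diag_mat (Nm t c d)"
    by (rule diag_four_block_mat, auto)
  finally have eq: "char_poly (four_block_mat (Jm t a b) Y (0\<^sub>m t t) (Jm t c d)) = (\<Prod>a\<leftarrow>diag_mat (Nm t a b) @ diag_mat (Nm t c d). [:- a, 1:])" .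
  show ?thesis unfolding eq by (rule proots_lin)
qed

lemma spec_sym: assumes X: "X = Jm t x1 x2" and Y: "Y = Jm t y1 y2"
  shows "proots (char_poly (four_block_mat X Y Y X))
     = mset (diag_mat (Nm t (x1 + y1) (x2 + y2)) @ diag_mat (Nm t (x1 - y1) (x2 - y2)))"
proof -
  have "char_poly (four_block_mat X Y Y X) = char_poly (four_block_mat (X + Y) Y (0\<^sub>m t t) (X - Y))"
    by (rule char_poly_similar, rule blk, auto simp: X Y)
  also have "X + Y = Jm t (x1 + y1) (x2 + y2)" by (simp add: X Y Jm_add)
  also have "X - Y = Jm t (x1 - y1) (x2 - y2)" by (simp add: X Y Jm_sub)
  finally show ?thesis using spec_block[of Y t] Y by simp
qed


definition prism :: "nat \<Rightarrow> nat \<Rightarrow> nat \<Rightarrow> bool" where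
  "prism t i j \<longleftrightarrow> i < 2 * t \<and> j < 2 * t \<and> i \<noteq> j \<and> ((i < t) = (j < t) \<or> j = i + t \<or> i = j + t)"

lemma prism_simple: "simple_graph (2 * t) (prism t)"
  unfolding simple_graph_def prism_def by auto

lemma prism_regular: "regular_graph (2 * t) (prism t)"
  unfolding regular_graph_def
proof (intro exI allI impI)
  fix i assume i: "i < 2 * t"
  show "card {j. j < 2 * t \<and> prism t i j} = t"
  proof (cases "i < t")
    case True
    have "{j. j < 2 * t \<and> prism t i j} = insert (i + t) ({..<t} - {i})"
      using True i unfolding prism_def by auto
    thus ?thesis using True by simp
  next
    case False
    have "{j. j < 2 * t \<and> prism t i j} = insert (i - t) ({t..<2*t} - {i})"
      using False i unfolding prism_def by auto
    moreover have "i - t \<notin> {t..<2*t} - {i}" using False i by auto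
    moreover have "card ({t..<2*t} - {i}) = t - 1" using False i by (subst card_Diff_singleton, auto)
    ultimately show ?thesis using False i by simp
  qed
qed

lemma adj_prism: "adj_matrix (2 * t) (prism t) = four_block_mat (Jm t (-1) 1) (Jm t 1 0) (Jm t 1 0) (Jm t (-1) 1)"
  by (rule eq_matI, auto simp: adj_matrix_def Jm_def prism_def)

lemma adj_compl: "adj_matrix (2 * t) (complement_graph (2 * t) (prism t)) = four_block_mat (Jm t 0 0) (Jm t (-1) 1) (Jm t (-1) 1) (Jm t 0 0)"
  by (rule eq_matI, auto simp: adj_matrix_def Jm_def prism_def complement_graph_def)

lemma spec_prism: assumes "t > 0" shows "adj_spectrum (2 * t) (prism t) =
   mset ((of_nat t) # replicate (t - 1) 0 @ (of_nat t - 2) # replicate (t - 1) (-2))"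
  unfolding adj_spectrum_def adj_prism using assms
  by (subst spec_sym[OF refl refl], simp add: Nm_diag)

lemma spec_compl: assumes "t > 0" shows "adj_spectrum (2 * t) (complement_graph (2 * t) (prism t)) =
   mset ((of_nat t - 1) # replicate (t - 1) (-1) @ (1 - of_nat t) # replicate (t - 1) 1)"
  unfolding adj_spectrum_def adj_compl using assms
  by (subst spec_sym[OF refl refl], simp add: Nm_diag)


lemma energy_list: "(\<Sum>z\<in># mset xs. cmod z) = (\<Sum>z\<leftarrow>xs. cmod z)"
  by (induction xs) auto

theorem mainTheorem5:
  fixes t :: nat
  assumes "t \<ge> 2"
  shows "\<exists>E. simple_graph (2 * t) E \<and> regular_graph (2 * t) E \<and>
           graph_energy (2 * t) E = graph_energy (2 * t) (complement_graph (2 * t) E) \<and>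
           \<not> isospectral (2 * t) E (complement_graph (2 * t) E)"
proof (intro exI conjI)
  have t0: "t > 0" using assms by simp
  have c1: "cmod (of_nat t - 2) = real t - 2"
  proof -
    have "(of_nat t - 2 :: complex) = complex_of_real (real t - 2)" by simp
    thus ?thesis using assms by (simp add: norm_of_real del: of_real_diff)
  qed
  have c2: "cmod (of_nat t - 1) = real t - 1"
  proof -
    have "(of_nat t - 1 :: complex) = complex_of_real (real t - 1)" by simp
    thus ?thesis using assms by (simp add: norm_of_real del: of_real_diff)
  qed
  have c3: "cmod (1 - of_nat t) = real t - 1"
  proof -
    have "(1 - of_nat t :: complex) = complex_of_real (1 - real t)" by simp
    thus ?thesis using assms by (simp add: norm_of_real del: of_real_diff)
  qed
  show "simple_graph (2 * t) (prism t)" by (rule prism_simple)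
  show "regular_graph (2 * t) (prism t)" by (rule prism_regular)
  show "graph_energy (2 * t) (prism t) = graph_energy (2 * t) (complement_graph (2 * t) (prism t))"
    unfolding graph_energy_def spec_prism[OF t0] spec_compl[OF t0] energy_list
    using assms by (simp add: c1 c2 c3 sum_list_replicate algebra_simps)
  show "\<not> isospectral (2 * t) (prism t) (complement_graph (2 * t) (prism t))"
  proof
    assume "isospectral (2 * t) (prism t) (complement_graph (2 * t) (prism t))"
    hence "of_nat t \<in># adj_spectrum (2 * t) (complement_graph (2 * t) (prism t))"
      unfolding isospectral_def spec_prism[OF t0] by (metis list.set_intros(1) set_mset_mset)
    hence "(of_nat t :: complex) \<in> set ((of_nat t - 1) # replicate (t - 1) (-1) @ (1 - of_nat t) # replicate (t - 1) 1)"
      unfolding spec_compl[OF t0] by (simp only: set_mset_mset)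
    note m = this
    have n1: "(of_nat t :: complex) \<noteq> -1" "(of_nat t :: complex) \<noteq> 1"
      using assms by (auto simp: complex_eq_iff)
    have n2: "(of_nat t :: complex) \<noteq> 1 - of_nat t"
    proof
      assume "(of_nat t :: complex) = 1 - of_nat t"
      hence "(of_nat (2 * t) :: complex) = of_nat 1" by (simp add: algebra_simps)
      hence "2 * t = 1" by (simp only: of_nat_eq_iff)
      thus False by simp
    qed
    show False using m n1 n2 assms by (auto split: if_splits)
  qed
qed

end
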